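(* If $\mathbb{A}_1,\mathbb{A}_2$ are $C$-asymptotic sets, then the Minkowski sum $\mathbb{A}_1+\mathbb{A}_2$ is also a $C$-asymptotic set.
   Context: $C\subset\mathbb{R}^n$ ($n\ge2$) is a pointed closed convex cone with nonempty interior. A $C$-asymptotic set is an unbounded closed convex set $\mathbb{A}\subset C$ with nonempty interior and $o\notin\mathbb{A}$ such that $\lim_{x\in\partial\mathbb{A},|x|\to\infty}d(x,\partial C)=0$. *)

theory Defs
  imports "HOL-Analysis.Analysis"
begin

definition pointed_cc_cone :: "'a::euclidean_space set \<Rightarrow> bool" where
  "pointed_cc_cone C \<longleftrightarrow> cone C \<and> convex C \<and> closed C \<and> interior C \<noteq> {}
      \<and> C \<inter> uminus ` C = {0}"

definition C_asymptotic :: "'a::euclidean_space set \<Rightarrow> 'a set \<Rightarrow> bool" where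
  "C_asymptotic C A \<longleftrightarrow> \<not> bounded A \<and> closed A \<and> convex A \<and> interior A \<noteq> {}
      \<and> A \<subseteq> C \<and> 0 \<notin> A
      \<and> (\<forall>e>0. \<exists>R. \<forall>x\<in>frontier A. norm x > R \<longrightarrow> infdist x (frontier C) < e)"

definition minkowski_sum :: "'a::real_vector set \<Rightarrow> 'a set \<Rightarrow> 'a set" where
  "minkowski_sum A B = {a + b | a b. a \<in> A \<and> b \<in> B}"

end

theory Submission
  imports Defs
begin

lemma cone_add:
  assumes "cone C" "convex C" "x \<in> C" "y \<in> C"
  shows "x + y \<in> C"
  using assms convex_cone by blast

lemma cone_sum:
  assumes "cone C" "convex C" "0 \<in> C" "finite s"
  shows "s \<subseteq> C \<Longrightarrow> (\<forall>x\<in>s. 0 \<le> u x) \<Longrightarrow> (\<Sum>v\<in>s. u v *\<^sub>R v) \<in> C"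
  using assms(4)
proof (induction s rule: finite_induct)
  case empty
  then show ?case using assms(3) by simp
next
  case (insert x F)
  have "u x *\<^sub>R x \<in> C" using insert.prems assms(1) by (simp add: cone_def)
  moreover have "(\<Sum>v\<in>F. u v *\<^sub>R v) \<in> C" using insert by auto
  ultimately show ?case using insert.hyps cone_add[OF assms(1,2)] by simp
qed

lemma pointed_functional:
  fixes C :: "'a::euclidean_space set"
  assumes "pointed_cc_cone C"
  shows "\<exists>w \<kappa>. \<kappa> > 0 \<and> (\<forall>c\<in>C. \<kappa> * norm c \<le> inner w c)"
proof -
  have cC: "cone C" "convex C" "closed C" and pt: "C \<inter> uminus ` C = {0}"
    using assms by (auto simp: pointed_cc_cone_def)
  have "0 \<in> C" using pt by auto
  define K where "K = C \<inter> sphere 0 1"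
  show ?thesis
  proof (cases "K = {}")
    case True
    have "c = 0" if "c \<in> C" for c
    proof (rule ccontr)
      assume "c \<noteq> 0"
      then have "(1 / norm c) *\<^sub>R c \<in> K" using that cC(1) by (auto simp: K_def cone_def)
      then show False using True by auto
    qed
    then show ?thesis by (intro exI[of _ 0] exI[of _ 1]) auto
  next
    case False
    have "compact K" unfolding K_def
      by (rule closed_Int_compact[OF cC(3) compact_sphere])
    then have cH: "compact (convex hull K)" by (rule compact_convex_hull)
    have "0 \<notin> convex hull K"
    proof
      assume "0 \<in> convex hull K"
      then obtain s u where s: "finite s" "s \<subseteq> K" "\<forall>x\<in>s. 0 \<le> u x" "sum u s = 1"
        "(\<Sum>v\<in>s. u v *\<^sub>R v) = 0"
        unfolding convex_hull_explicit by blast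
      obtain v0 where v0: "v0 \<in> s" "u v0 > 0"
      proof (rule ccontr)
        assume "\<not> thesis"
        then have "\<forall>x\<in>s. u x \<le> 0" using that by force
        then have "sum u s \<le> 0" by (simp add: sum_nonpos)
        then show False using s(4) by simp
      qed
      have "(\<Sum>v\<in>s - {v0}. u v *\<^sub>R v) \<in> C"
      proof (rule cone_sum[OF cC(1,2) \<open>0 \<in> C\<close>])
        show "finite (s - {v0})" using s(1) by simp
        show "s - {v0} \<subseteq> C" using s(2) unfolding K_def by blast
        show "\<forall>x\<in>s - {v0}. 0 \<le> u x" using s(3) by blast
      qed
      moreover have "(\<Sum>v\<in>s. u v *\<^sub>R v) = u v0 *\<^sub>R v0 + (\<Sum>v\<in>s - {v0}. u v *\<^sub>R v)"
        using s(1) v0(1) by (simp add: sum.remove)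
      ultimately have m: "- (u v0 *\<^sub>R v0) \<in> C" using s(5)
        by (metis add.commute eq_neg_iff_add_eq_0)
      have p: "u v0 *\<^sub>R v0 \<in> C" using v0 s(2) cC(1) unfolding K_def cone_def by auto
      have "u v0 *\<^sub>R v0 \<in> uminus ` C" using image_eqI[OF _ m, of "u v0 *\<^sub>R v0" uminus] by simp
      with p pt have "u v0 *\<^sub>R v0 = 0" by blast
      moreover have "v0 \<noteq> 0" using v0 s(2) by (auto simp: K_def)
      ultimately show False using v0 by simp
    qed
    then obtain a b where ab: "a \<noteq> 0" "0 < b" "\<forall>x\<in>convex hull K. inner a x > b"
      using separating_hyperplane_closed_0[OF convex_convex_hull compact_imp_closed[OF cH]] by blast
    have "b * norm c \<le> inner a c" if "c \<in> C" for c
    proof (cases "c = 0")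
      case True then show ?thesis by simp
    next
      case False
      then have "(1 / norm c) *\<^sub>R c \<in> K" using that cC(1) by (auto simp: K_def cone_def)
      then have "inner a ((1 / norm c) *\<^sub>R c) > b" by (rule ab(3)[rule_format, OF hull_inc])
      then have "inner a c / norm c > b" by (simp add: divide_inverse mult.commute)
      moreover have "norm c > 0" using False by simp
      ultimately show ?thesis by (simp add: pos_less_divide_eq mult.commute less_imp_le)
    qed
    then show ?thesis using ab(2) by blast
  qed
qed

lemma ball_infdist_ge:
  fixes C :: "'a::euclidean_space set"
  assumes "ball x e \<subseteq> C" "frontier C \<noteq> {}"
  shows "e \<le> infdist x (frontier C)"
proof -
  have bi: "ball x e \<subseteq> interior C" using assms(1) by (simp add: interior_maximal)
  have "e \<le> dist x f" if "f \<in> frontier C" for f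
  proof (rule ccontr)
    assume "\<not> e \<le> dist x f"
    then have "f \<in> interior C" using bi by auto
    then show False using that by (simp add: frontier_def)
  qed
  then show ?thesis using assms(2) by (simp add: infdist_notempty cINF_greatest)
qed

lemma infdist_ge_ball:
  fixes C :: "'a::euclidean_space set"
  assumes "x \<in> C" "e \<le> infdist x (frontier C)"
  shows "ball x e \<subseteq> C"
proof
  fix z assume z: "z \<in> ball x e"
  show "z \<in> C"
  proof (rule ccontr)
    assume "z \<notin> C"
    have "closed_segment x z \<inter> frontier C \<noteq> {}"
      by (rule connected_Int_frontier) (use \<open>x \<in> C\<close> \<open>z \<notin> C\<close> in auto)
    then obtain f where f: "f \<in> closed_segment x z" "f \<in> frontier C" by blast
    have "dist f x \<le> dist x z" using dist_in_closed_segment[OF f(1)] by blast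
    then have "infdist x (frontier C) \<le> dist x z"
      using infdist_le[OF f(2), of x] by (simp add: dist_commute)
    then show False using z assms(2) by simp
  qed
qed

lemma asym_deep:
  fixes C A :: "'a::euclidean_space set"
  assumes pc: "pointed_cc_cone C" and as: "C_asymptotic C A"
    and kp: "\<kappa> > 0" and wk: "\<forall>c\<in>C. \<kappa> * norm c \<le> inner w c" and ep: "e > 0"
  shows "\<exists>R. \<forall>y. inner w y > R \<and> ball y e \<subseteq> C \<longrightarrow> y \<in> A"
proof -
  have cC: "cone C" "convex C" "closed C" and pt: "C \<inter> uminus ` C = {0}"
    using pc by (auto simp: pointed_cc_cone_def)
  have aA: "\<not> bounded A" "closed A" "convex A" "interior A \<noteq> {}" "A \<subseteq> C"
    and aF: "\<forall>e>0. \<exists>R. \<forall>x\<in>frontier A. norm x > R \<longrightarrow> infdist x (frontier C) < e"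
    using as by (auto simp: C_asymptotic_def)
  obtain p where "p \<in> interior A" using aA(4) by blast
  then obtain r where r: "r > 0" "ball p r \<subseteq> A" by (auto simp: mem_interior)
  define e' where "e' = min e (r/2)"
  have e'p: "e' > 0" using ep r by (simp add: e'_def)
  obtain R0 where R0: "\<forall>x\<in>frontier A. norm x > R0 \<longrightarrow> infdist x (frontier C) < e'"
    using aF e'p by blast
  have "C \<noteq> UNIV"
  proof
    assume "C = UNIV"
    obtain b :: 'a where b: "b \<in> Basis" using nonempty_Basis by blast
    have "b \<in> uminus ` C" using \<open>C = UNIV\<close> by (metis UNIV_I image_eqI minus_minus)
    then have "b \<in> C \<inter> uminus ` C" using \<open>C = UNIV\<close> by simp
    then show False using pt b nonzero_Basis by auto
  qed
  moreover have "C \<noteq> {}" using r aA(5) by (metis centre_in_ball empty_iff subset_empty)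
  ultimately have fC: "frontier C \<noteq> {}" by (simp add: frontier_eq_empty)
  define R where "R = norm w * max R0 0"
  have big: "norm y > R0" if "inner w y > R" for y
  proof (rule ccontr)
    assume "\<not> norm y > R0"
    then have "norm y \<le> max R0 0" by simp
    then have "norm w * norm y \<le> norm w * max R0 0" by (simp add: mult_left_mono)
    then show False using that norm_cauchy_schwarz[of w y] by (simp add: R_def)
  qed
  define D where "D = {y. inner w y > R \<and> ball y e' \<subseteq> C}"
  have "convex D"
    unfolding convex_def
  proof (intro ballI allI impI)
    fix x y :: 'a and u v :: real
    assume xy: "x \<in> D" "y \<in> D" and uv: "0 \<le> u" "0 \<le> v" "u + v = 1"
    have "inner w (u *\<^sub>R x + v *\<^sub>R y) = u * inner w x + v * inner w y"
      by (simp add: inner_add_right)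
    also have "\<dots> > u * R + v * R"
    proof -
      have "u * inner w x \<ge> u * R" "v * inner w y \<ge> v * R"
        using xy uv by (auto simp: D_def intro: mult_left_mono)
      moreover have "u * inner w x > u * R \<or> v * inner w y > v * R"
        using xy uv by (cases "u = 0") (auto simp: D_def)
      ultimately show ?thesis by linarith
    qed
    finally have i: "inner w (u *\<^sub>R x + v *\<^sub>R y) > R" using uv by (simp add: distrib_right[symmetric])
    have "ball (u *\<^sub>R x + v *\<^sub>R y) e' \<subseteq> C"
    proof
      fix z assume z: "z \<in> ball (u *\<^sub>R x + v *\<^sub>R y) e'"
      define d where "d = z - (u *\<^sub>R x + v *\<^sub>R y)"
      have nd: "norm d < e'" using z by (simp add: d_def dist_norm norm_minus_commute)
      have "x + d \<in> C" "y + d \<in> C" using xy nd by (auto simp: D_def dist_norm subset_eq)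
      then have "u *\<^sub>R (x + d) + v *\<^sub>R (y + d) \<in> C"
        using cC(2) uv by (simp add: convex_def)
      moreover have "u *\<^sub>R (x + d) + v *\<^sub>R (y + d) = z"
      proof -
        have "u *\<^sub>R (x + d) + v *\<^sub>R (y + d) = u *\<^sub>R x + v *\<^sub>R y + (u + v) *\<^sub>R d"
          by (simp add: algebra_simps)
        then show ?thesis using uv by (simp add: d_def)
      qed
      ultimately show "z \<in> C" by simp
    qed
    then show "u *\<^sub>R x + v *\<^sub>R y \<in> D" using i by (simp add: D_def)
  qed
  then have cD: "connected D" by (rule convex_connected)
  have DF: "D \<inter> frontier A = {}"
  proof (rule ccontr)
    assume "D \<inter> frontier A \<noteq> {}"
    then obtain y where y: "y \<in> D" "y \<in> frontier A" by blast
    then have "infdist y (frontier C) < e'" using R0 big by (auto simp: D_def)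
    moreover have "e' \<le> infdist y (frontier C)"
      using ball_infdist_ge[OF _ fC] y by (auto simp: D_def)
    ultimately show False by simp
  qed
  have "D \<inter> A \<noteq> {}"
  proof -
    define M where "M = (2 * R + norm w * norm p) / \<kappa>"
    obtain a where a: "a \<in> A" "norm a > M" using aA(1) unfolding bounded_iff
      by (meson not_le)
    define m where "m = (1/2) *\<^sub>R p + (1/2) *\<^sub>R a"
    have "\<kappa> * norm a \<le> inner w a" using wk a aA(5) by auto
    moreover have "\<kappa> * norm a > 2 * R + norm w * norm p"
      using a(2) kp by (simp add: M_def pos_divide_less_eq mult.commute)
    moreover have "- (norm w * norm p) \<le> inner w p"
      using norm_cauchy_schwarz[of w "-p"] by simp
    ultimately have mR: "inner w m > R" by (simp add: m_def inner_add_right)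
    have "ball m (r/2) \<subseteq> A"
    proof
      fix z assume z: "z \<in> ball m (r/2)"
      have "p + 2 *\<^sub>R (z - m) \<in> ball p r"
        using z by (simp add: dist_norm norm_minus_commute)
      then have "p + 2 *\<^sub>R (z - m) \<in> A" using r by blast
      then have "(1/2) *\<^sub>R (p + 2 *\<^sub>R (z - m)) + (1/2) *\<^sub>R a \<in> A"
        using aA(3) a(1) by (simp add: convex_def)
      moreover have "(1/2) *\<^sub>R (p + 2 *\<^sub>R (z - m)) + (1/2) *\<^sub>R a = z"
        by (simp add: m_def algebra_simps)
      ultimately show "z \<in> A" by simp
    qed
    then have "ball m e' \<subseteq> A" by (smt (verit, best) e'_def subset_ball subset_trans)
    then have "m \<in> D" "m \<in> A" using mR aA(5) e'p by (auto simp: D_def)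
    then show ?thesis by blast
  qed
  moreover have "D - A = {}"
  proof (rule ccontr)
    assume "D - A \<noteq> {}"
    then have "D \<inter> frontier A \<noteq> {}" using connected_Int_frontier[OF cD] calculation by blast
    then show False using DF by simp
  qed
  ultimately have DA: "D \<subseteq> A" by blast
  show ?thesis
  proof (intro exI allI impI)
    fix y assume y: "inner w y > R \<and> ball y e \<subseteq> C"
    have "ball y e' \<subseteq> ball y e" by (simp add: e'_def subset_ball)
    then have "y \<in> D" using y by (auto simp: D_def)
    then show "y \<in> A" using DA by blast
  qed
qed

theorem lemma3p5:
  fixes C A1 A2 :: "'a::euclidean_space set"
  assumes "DIM('a) \<ge> 2"
    and "pointed_cc_cone C"
    and "C_asymptotic C A1"
    and "C_asymptotic C A2"
  shows "C_asymptotic C (minkowski_sum A1 A2)"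
proof -
  note pc = assms(2)
  have cC: "cone C" "convex C" "closed C" and pt: "C \<inter> uminus ` C = {0}"
    using pc by (auto simp: pointed_cc_cone_def)
  have a1: "\<not> bounded A1" "closed A1" "convex A1" "interior A1 \<noteq> {}" "A1 \<subseteq> C" "0 \<notin> A1"
    using assms(3) by (auto simp: C_asymptotic_def)
  have a2: "\<not> bounded A2" "closed A2" "convex A2" "interior A2 \<noteq> {}" "A2 \<subseteq> C" "0 \<notin> A2"
    using assms(4) by (auto simp: C_asymptotic_def)
  obtain w \<kappa> where kp: "\<kappa> > 0" and wk: "\<forall>c\<in>C. \<kappa> * norm c \<le> inner w c"
    using pointed_functional[OF pc] by blast
  have wnn: "inner w c \<ge> 0" if "c \<in> C" for c
    using wk that kp by (meson mult_nonneg_nonneg norm_ge_zero less_imp_le order_trans)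
  define S where "S = minkowski_sum A1 A2"
  have Smem: "z \<in> S \<longleftrightarrow> (\<exists>a b. z = a + b \<and> a \<in> A1 \<and> b \<in> A2)" for z
    by (auto simp: S_def minkowski_sum_def)
  have SC: "S \<subseteq> C" using a1(5) a2(5) by (auto simp: Smem intro!: cone_add[OF cC(1,2)])
  have S0: "0 \<notin> S"
  proof
    assume "0 \<in> S"
    then obtain a b where ab: "0 = a + b" "a \<in> A1" "b \<in> A2" by (auto simp: Smem)
    then have "a = - b" by (simp add: eq_neg_iff_add_eq_0)
    then have "a \<in> uminus ` C" using ab a2(5) by auto
    then have "a = 0" using pt ab a1(5) by auto
    then show False using ab a1(6) by simp
  qed
  have cS: "convex S"
  proof -
    have "S = (\<Union>x\<in>A1. \<Union>y\<in>A2. {x + y})" by (auto simp: Smem) blast+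
    then show ?thesis using convex_sums[OF a1(3) a2(3)] by simp
  qed
  obtain b0 where b0: "b0 \<in> A2" using a2(1) by fastforce
  have iS: "interior S \<noteq> {}"
  proof -
    obtain p where "p \<in> interior A1" using a1(4) by blast
    then obtain r where r: "r > 0" "ball p r \<subseteq> A1" by (auto simp: mem_interior)
    have "ball (p + b0) r \<subseteq> S"
    proof
      fix y assume y: "y \<in> ball (p + b0) r"
      have "y - b0 \<in> ball p r" using y by (simp add: dist_norm algebra_simps)
      then have "y - b0 \<in> A1" using r by blast
      then show "y \<in> S" using b0 Smem[of y] by (metis diff_add_cancel)
    qed
    then have "p + b0 \<in> interior S" using r(1) by (auto simp: mem_interior)
    then show ?thesis by blast
  qed
  have uS: "\<not> bounded S"
  proof
    assume "bounded S"
    then obtain M where M: "\<forall>x\<in>S. norm x \<le> M" by (auto simp: bounded_iff)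
    have "norm a \<le> M + norm b0" if "a \<in> A1" for a
    proof -
      have "a + b0 \<in> S" using that b0 by (auto simp: Smem)
      then have "norm (a + b0) \<le> M" using M by blast
      moreover have "norm a \<le> norm (a + b0) + norm b0"
        using norm_triangle_ineq4[of "a + b0" b0] by simp
      ultimately show ?thesis by simp
    qed
    then have "bounded A1" by (auto simp: bounded_iff)
    then show False using a1(1) by simp
  qed
  have clS: "closed S"
  proof -
    have "closure S \<subseteq> S"
    proof
      fix z assume z: "z \<in> closure S"
      define M where "M = inner w z + 1"
      define U where "U = {y. inner w y < M}"
      define B1 where "B1 = A1 \<inter> {y. inner w y \<le> M}"
      define B2 where "B2 = A2 \<inter> {y. inner w y \<le> M}"
      have bnd: "norm y \<le> M / \<kappa>" if "y \<in> C" "inner w y \<le> M" for y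
      proof -
        have "\<kappa> * norm y \<le> M" using wk that by (meson order_trans)
        then show ?thesis using kp by (simp add: pos_le_divide_eq mult.commute)
      qed
      have "bounded B1" unfolding bounded_iff
        by (rule exI[of _ "M / \<kappa>"]) (use bnd a1(5) in \<open>auto simp: B1_def\<close>)
      moreover have "closed B1" unfolding B1_def by (rule closed_Int[OF a1(2) closed_halfspace_le])
      ultimately have k1: "compact B1" by (simp add: compact_eq_bounded_closed)
      have "bounded B2" unfolding bounded_iff
        by (rule exI[of _ "M / \<kappa>"]) (use bnd a2(5) in \<open>auto simp: B2_def\<close>)
      moreover have "closed B2" unfolding B2_def by (rule closed_Int[OF a2(2) closed_halfspace_le])
      ultimately have k2: "compact B2" by (simp add: compact_eq_bounded_closed)
      have cB: "compact {x + y |x y. x \<in> B1 \<and> y \<in> B2}" by (rule compact_sums[OF k1 k2])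
      have "U \<inter> S \<subseteq> {x + y |x y. x \<in> B1 \<and> y \<in> B2}"
      proof
        fix q assume q: "q \<in> U \<inter> S"
        then obtain a b where ab: "q = a + b" "a \<in> A1" "b \<in> A2" by (auto simp: Smem)
        have "inner w a \<ge> 0" "inner w b \<ge> 0" using ab a1(5) a2(5) wnn by auto
        moreover have "inner w a + inner w b < M" using q ab by (simp add: U_def inner_add_right)
        ultimately have "a \<in> B1" "b \<in> B2" using ab by (auto simp: B1_def B2_def)
        then show "q \<in> {x + y |x y. x \<in> B1 \<and> y \<in> B2}" using ab by blast
      qed
      moreover have "z \<in> closure (U \<inter> S)"
        using open_Int_closure_subset[of U S] z open_halfspace_lt[of w M]
        by (auto simp: U_def M_def)
      ultimately have "z \<in> {x + y |x y. x \<in> B1 \<and> y \<in> B2}"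
        using closure_minimal[OF _ compact_imp_closed[OF cB]] by blast
      then show "z \<in> S" by (auto simp: Smem B1_def B2_def)
    qed
    then show ?thesis by (simp add: closure_subset_eq)
  qed
  have fr: "\<exists>R. \<forall>x\<in>frontier S. norm x > R \<longrightarrow> infdist x (frontier C) < e" if ep: "e > 0" for e
  proof -
    obtain R1 where R1: "\<forall>y. inner w y > R1 \<and> ball y (e/4) \<subseteq> C \<longrightarrow> y \<in> A1"
      using asym_deep[OF pc assms(3) kp wk, of "e/4"] ep by auto
    obtain R2 where R2: "\<forall>y. inner w y > R2 \<and> ball y (e/2) \<subseteq> C \<longrightarrow> y \<in> A2"
      using asym_deep[OF pc assms(4) kp wk, of "e/2"] ep by auto
    define Rf where "Rf = (2 * max R1 R2 + norm w * e) / \<kappa>"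
    show ?thesis
    proof (intro exI ballI impI)
      fix x assume xf: "x \<in> frontier S" and xn: "norm x > Rf"
      show "infdist x (frontier C) < e"
      proof (rule ccontr)
        assume "\<not> infdist x (frontier C) < e"
        then have ie: "e \<le> infdist x (frontier C)" by simp
        have xS: "x \<in> S" using xf frontier_subset_closed[OF clS] by blast
        then have xC: "x \<in> C" using SC by blast
        have bx: "ball x e \<subseteq> C" by (rule infdist_ge_ball[OF xC ie])
        define h where "h = (1/2) *\<^sub>R x"
        have bh: "ball h (e/2) \<subseteq> C"
        proof
          fix z assume zh: "z \<in> ball h (e/2)"
          have "x - 2 *\<^sub>R z = 2 *\<^sub>R (h - z)" by (simp add: h_def algebra_simps)
          then have "norm (x - 2 *\<^sub>R z) = 2 * norm (h - z)" by simp
          moreover have "norm (h - z) < e/2" using zh by (simp add: dist_norm)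
          ultimately have "2 *\<^sub>R z \<in> ball x e" by (simp add: dist_norm)
          then have "2 *\<^sub>R z \<in> C" using bx by blast
          then have "(1/2) *\<^sub>R (2 *\<^sub>R z) \<in> C" using cC(1) unfolding cone_def
            by (metis less_eq_real_def zero_less_divide_1_iff zero_less_numeral)
          then show "z \<in> C" by simp
        qed
        have "\<kappa> * norm x \<le> inner w x" using wk xC by blast
        moreover have "\<kappa> * norm x > 2 * max R1 R2 + norm w * e"
          using xn kp by (simp add: Rf_def pos_divide_less_eq mult.commute)
        ultimately have wx: "inner w h > max R1 R2 + norm w * e / 2"
          by (simp add: h_def)
        have "norm w * e / 2 \<ge> 0" using ep by simp
        then have "inner w h > R2" using wx by linarith
        then have hA2: "h \<in> A2" using R2 bh by blast
        have bA1: "ball h (e/4) \<subseteq> A1"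
        proof
          fix z assume z: "z \<in> ball h (e/4)"
          have "ball z (e/4) \<subseteq> ball h (e/2)"
          proof
            fix y assume "y \<in> ball z (e/4)"
            then show "y \<in> ball h (e/2)" using z dist_triangle[of h y z] by auto
          qed
          then have bz: "ball z (e/4) \<subseteq> C" using bh by blast
          have "inner w (h - z) \<le> norm w * norm (h - z)" by (rule norm_cauchy_schwarz)
          moreover have "norm (h - z) < e/4" using z by (simp add: dist_norm)
          then have "norm w * norm (h - z) \<le> norm w * (e/4)"
            by (intro mult_left_mono) auto
          moreover have "norm w * e \<ge> 0" "R1 \<le> max R1 R2" using ep by auto
          ultimately have "inner w z > R1" using wx by (simp add: inner_diff_right)
          then show "z \<in> A1" using R1 bz by blast
        qed
        have "ball x (e/4) \<subseteq> S"
        proof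
          fix y assume y: "y \<in> ball x (e/4)"
          have "y - h \<in> ball h (e/4)"
          proof -
            have "h + h = x" unfolding h_def by (simp add: scaleR_left_distrib[symmetric])
            then have e: "h - (y - h) = x - y" by (simp add: algebra_simps)
            have "dist h (y - h) = dist x y" unfolding dist_norm e ..
            then show ?thesis using y by simp
          qed
          then have "y - h \<in> A1" using bA1 by blast
          then show "y \<in> S" using hA2 Smem[of y] by (metis diff_add_cancel)
        qed
        then have "x \<in> interior S" using ep by (auto simp: mem_interior intro!: exI[of _ "e/4"])
        then show False using xf by (simp add: frontier_def)
      qed
    qed
  qed
  show ?thesis
    unfolding C_asymptotic_def S_def[symmetric]
    using uS clS cS iS SC S0 fr by blast
qed

end
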